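(* Let $R$ be a commutative ring with identity containing the field $\mathbb{Q}$ of rational numbers as a subring with the same identity (equivalently, every nonzero integer is a unit in $R$). Then $R$ is a u-ring.
   Context: An ideal $I$ of $R$ is a u-ideal if whenever $I\subseteq I_1\cup\cdots\cup I_m$ for finitely many ideals $I_1,\dots,I_m$ of $R$, then $I\subseteq I_j$ for some $j$. A ring $R$ is a u-ring if every ideal of $R$ is a u-ideal. *)

theory Defs
  imports "HOL-Algebra.Algebra"
begin

definition u_ideal :: "'a set \<Rightarrow> ('a, 'b) ring_scheme \<Rightarrow> bool" where
  "u_ideal I R \<longleftrightarrow> ideal I R \<and>
     (\<forall>(m::nat) (J :: nat \<Rightarrow> 'a set).
        (\<forall>j<m. ideal (J j) R) \<longrightarrow> I \<subseteq> (\<Union>j<m. J j) \<longrightarrow> (\<exists>j<m. I \<subseteq> J j))"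

definition u_ring :: "('a, 'b) ring_scheme \<Rightarrow> bool" where
  "u_ring R \<longleftrightarrow> (\<forall>I. ideal I R \<longrightarrow> u_ideal I R)"

end

theory Submission
  imports Defs
begin

context cring
begin

lemma idl_minus: "ideal J R \<Longrightarrow> a \<in> J \<Longrightarrow> b \<in> J \<Longrightarrow> a \<ominus> b \<in> J"
  unfolding a_minus_def
  by (simp add: additive_subgroup.a_closed additive_subgroup.a_inv_closed ideal.axioms(1))

lemma uring_aux:
  fixes m :: nat
  assumes U: "\<forall>n::int. n \<noteq> 0 \<longrightarrow> add_pow R n \<one> \<in> Units R"
    and I: "ideal I R"
  shows "\<forall>J. (\<forall>j<m. ideal (J j) R) \<longrightarrow> I \<subseteq> (\<Union>j<m. J j) \<longrightarrow> (\<exists>j<m. I \<subseteq> J j)"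
proof (induction m)
  case 0
  have "\<zero> \<in> I" using I by (simp add: additive_subgroup.zero_closed ideal.axioms(1))
  then show ?case by auto
next
  case (Suc m)
  show ?case
  proof (intro allI impI)
    fix J assume J: "\<forall>j<Suc m. ideal (J j) R" and cov: "I \<subseteq> (\<Union>j<Suc m. J j)"
    show "\<exists>j<Suc m. I \<subseteq> J j"
    proof (rule ccontr)
      assume neg: "\<not> (\<exists>j<Suc m. I \<subseteq> J j)"
      have "\<not> I \<subseteq> (\<Union>j<m. J j)"
        using Suc.IH J neg by (metis less_SucI)
      then obtain x where xI: "x \<in> I" and xn: "\<And>j. j < m \<Longrightarrow> x \<notin> J j" by blast
      have xJm: "x \<in> J m" using cov xI xn less_Suc_eq by blast
      obtain y where yI: "y \<in> I" and yn: "y \<notin> J m" using neg by blast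
      have IR: "I \<subseteq> carrier R" using I by (simp add: ideal.axioms(1) additive_subgroup.a_subset)
      have xc: "x \<in> carrier R" and yc: "y \<in> carrier R" using IR xI yI by auto
      define s where "s = (\<lambda>k::int. add_pow R k \<one>)"
      have sc: "\<And>k. s k \<in> carrier R" unfolding s_def by simp
      define z where "z = (\<lambda>n::nat. y \<oplus> s (int n) \<otimes> x)"
      have zc: "\<And>n. z n \<in> carrier R" unfolding z_def using sc xc yc by simp
      have zI: "\<And>n. z n \<in> I" unfolding z_def
        using I xI yI sc by (meson ideal.I_l_closed ideal.axioms(1) additive_subgroup.a_closed)
      have zex: "\<exists>j<m. z n \<in> J j" for n
      proof -
        obtain j where j: "j < Suc m" "z n \<in> J j" using cov zI[of n] by blast
        have "j \<noteq> m"
        proof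
          assume "j = m"
          then have zm: "z n \<in> J m" using j by simp
          have Jm: "ideal (J m) R" using J by simp
          have "s (int n) \<otimes> x \<in> J m" using Jm xJm sc by (simp add: ideal.I_l_closed)
          hence "z n \<ominus> s (int n) \<otimes> x \<in> J m" using zm Jm
            by (simp add: idl_minus)
          moreover have "z n \<ominus> s (int n) \<otimes> x = y" unfolding z_def using sc xc yc
            by (simp add: a_minus_def a_assoc r_neg)
          ultimately show False using yn by simp
        qed
        with j less_Suc_eq show ?thesis by blast
      qed
      define f where "f = (\<lambda>n. SOME j. j < m \<and> z n \<in> J j)"
      have f: "f n < m \<and> z n \<in> J (f n)" for n
        unfolding f_def using someI_ex[OF zex[of n]] .
      have "f ` {..m} \<subseteq> {..<m}" using f by auto
      hence "card (f ` {..m}) \<le> m" by (metis card_lessThan card_mono finite_lessThan)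
      hence "\<not> inj_on f {..m}" by (intro pigeonhole) simp
      then obtain a b where ab: "a \<noteq> b" "f a = f b" unfolding inj_on_def by blast
      define j where "j = f a"
      have jm: "j < m" using f j_def by simp
      have Jj: "ideal (J j) R" using J jm by simp
      have za: "z a \<in> J j" and zb: "z b \<in> J j" using f ab j_def by metis+
      have d: "z a \<ominus> z b \<in> J j" using za zb Jj
        by (simp add: idl_minus)
      have sdiff: "s (int a - int b) = s (int a) \<ominus> s (int b)"
        unfolding s_def a_minus_def by (simp add: add.int_pow_diff)
      have "z a \<ominus> z b = s (int a) \<otimes> x \<ominus> s (int b) \<otimes> x"
        unfolding z_def using sc xc yc by algebra
      also have "\<dots> = s (int a - int b) \<otimes> x" unfolding sdiff using sc xc by algebra
      finally have dJ: "s (int a - int b) \<otimes> x \<in> J j" using d by simp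
      have u: "s (int a - int b) \<in> Units R" using U ab(1) unfolding s_def by simp
      have "inv (s (int a - int b)) \<otimes> (s (int a - int b) \<otimes> x) \<in> J j"
        using Jj dJ u by (simp add: ideal.I_l_closed)
      moreover have "inv (s (int a - int b)) \<otimes> (s (int a - int b) \<otimes> x) = x"
        using u xc by (simp add: m_assoc[symmetric] Units_l_inv Units_inv_closed Units_closed)
      ultimately show False using xn jm by simp
    qed
  qed
qed

end

theorem lemma7:
  fixes R :: "('a, 'b) ring_scheme" (structure)
  assumes "cring R"
    and "\<forall>n::int. n \<noteq> 0 \<longrightarrow> add_pow R n \<one>\<^bsub>R\<^esub> \<in> Units R"
  shows "u_ring R"
  unfolding u_ring_def u_ideal_def
  using cring.uring_aux[OF assms(1) assms(2)] by blast

end
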